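(* Let $G$ be a connected threshold graph of order $n\ge 4$ and size $m$ with $n-1<m<\binom{n}{2}$, let $c$ be its number of type 1 vertices, $(b_1,\ldots,b_z)$ its backwards zero position sequence, $F_1=\sum_{i=1}^z b_i^2$, and $\rho$ the spectral radius of its adjacency matrix. Then \[\rho\ge\frac{c-2+\sqrt{c^2+\frac{4}{c-1}F_1}}{2}.\]
   Context: A threshold graph is a simple graph whose vertices can be ordered $v_1,\ldots,v_n$ so that for each $2\le i\le n$, $v_i$ is either adjacent to all of $v_1,\ldots,v_{i-1}$ (then $a_i=1$) or to none of them (then $a_i=0$); by convention $a_1=1$. Vertex $v_i$ is of type 1 if $a_i=1$ and of type 0 if $a_i=0$; $c$ and $z$ are the numbers of type 1 and type 0 vertices. The backwards zero position sequence $(b_1,\ldots,b_z)$ is defined by letting $b_i$ be the number of type 1 vertices appearing after the $i$-th type 0 vertex in the order $v_1,\ldots,v_n$. *)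

theory Defs
  imports Complex_Main "Jordan_Normal_Form.Spectral_Radius"
begin

definition simple_graph :: "nat \<Rightarrow> (nat \<Rightarrow> nat \<Rightarrow> bool) \<Rightarrow> bool" where
  "simple_graph n adj \<longleftrightarrow> (\<forall>i j. adj i j \<longrightarrow> i < n \<and> j < n \<and> i \<noteq> j \<and> adj j i)"

definition graph_connected :: "nat \<Rightarrow> (nat \<Rightarrow> nat \<Rightarrow> bool) \<Rightarrow> bool" where
  "graph_connected n adj \<longleftrightarrow> (\<forall>i j. i < n \<longrightarrow> j < n \<longrightarrow> adj\<^sup>*\<^sup>* i j)"

definition graph_size :: "nat \<Rightarrow> (nat \<Rightarrow> nat \<Rightarrow> bool) \<Rightarrow> nat" where
  "graph_size n adj = card {(i, j). i < j \<and> j < n \<and> adj i j}"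

definition adjacency_matrix :: "nat \<Rightarrow> (nat \<Rightarrow> nat \<Rightarrow> bool) \<Rightarrow> real mat" where
  "adjacency_matrix n adj = mat n n (\<lambda>(i, j). if adj i j then 1 else 0)"

definition graph_spectral_radius :: "nat \<Rightarrow> (nat \<Rightarrow> nat \<Rightarrow> bool) \<Rightarrow> real" where
  "graph_spectral_radius n adj = spectral_radius (map_mat complex_of_real (adjacency_matrix n adj))"

text \<open>Creation sequence: vertex i (0-based, i.e. v_{i+1}) is of type 1 iff a i.
  The graph is threshold with this vertex ordering iff a 0 holds (convention a_1 = 1)
  and each later vertex is adjacent to all or none of its predecessors according to a.\<close>

definition threshold_seq :: "nat \<Rightarrow> (nat \<Rightarrow> nat \<Rightarrow> bool) \<Rightarrow> (nat \<Rightarrow> bool) \<Rightarrow> bool" where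
  "threshold_seq n adj a \<longleftrightarrow> a 0 \<and>
     (\<forall>i j. i < j \<longrightarrow> j < n \<longrightarrow> (adj i j \<longleftrightarrow> a j))"

definition num_type1 :: "nat \<Rightarrow> (nat \<Rightarrow> bool) \<Rightarrow> nat" where
  "num_type1 n a = card {i. i < n \<and> a i}"

definition bzps :: "nat \<Rightarrow> (nat \<Rightarrow> bool) \<Rightarrow> nat list" where
  "bzps n a = map (\<lambda>k. card {j. k < j \<and> j < n \<and> a j}) (filter (\<lambda>k. \<not> a k) [0..<n])"

definition F1 :: "nat \<Rightarrow> (nat \<Rightarrow> bool) \<Rightarrow> nat" where
  "F1 n a = sum_list (map (\<lambda>b. b ^ 2) (bzps n a))"

end

theory Submission
  imports Defs
begin


definition mv :: "nat \<Rightarrow> (nat \<Rightarrow> nat \<Rightarrow> real) \<Rightarrow> (nat \<Rightarrow> real) \<Rightarrow> nat \<Rightarrow> real" where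
  "mv n M f = (\<lambda>i. \<Sum>j<n. M i j * f j)"

definition ip :: "nat \<Rightarrow> (nat \<Rightarrow> real) \<Rightarrow> (nat \<Rightarrow> real) \<Rightarrow> real" where
  "ip n f g = (\<Sum>i<n. f i * g i)"

lemma ip_sym:
  assumes sym: "\<And>i j. i < n \<Longrightarrow> j < n \<Longrightarrow> M i j = M j i"
  shows "ip n (mv n M f) g = ip n f (mv n M g)"
proof -
  have "ip n (mv n M f) g = (\<Sum>i<n. \<Sum>j<n. M i j * f j * g i)"
    unfolding ip_def mv_def by (simp add: sum_distrib_right)
  also have "\<dots> = (\<Sum>j<n. \<Sum>i<n. M i j * f j * g i)" by (rule sum.swap)
  also have "\<dots> = (\<Sum>j<n. \<Sum>i<n. f j * (M j i * g i))"
    by (intro sum.cong refl) (simp add: sym mult_ac)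
  also have "\<dots> = ip n f (mv n M g)"
    unfolding ip_def mv_def by (simp add: sum_distrib_left)
  finally show ?thesis .
qed

lemma ip_CS: "(ip n f g)^2 \<le> ip n f f * ip n g g"
proof -
  have "(\<Sum>i<n. f i * g i)\<^sup>2 \<le> (\<Sum>i<n. (f i)\<^sup>2) * (\<Sum>i<n. (g i)\<^sup>2)"
  proof (cases "(\<Sum>i<n. (g i)\<^sup>2) = 0")
    case True
    then have "\<forall>i<n. g i = 0" by (simp add: sum_nonneg_eq_0_iff)
    then show ?thesis by simp
  next
    case False
    define A where "A = (\<Sum>i<n. (f i)\<^sup>2)"
    define B where "B = (\<Sum>i<n. (g i)\<^sup>2)"
    define C where "C = (\<Sum>i<n. f i * g i)"
    have Bpos: "B > 0" using False unfolding B_def by (metis less_eq_real_def sum_nonneg zero_le_power2)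
    have "0 \<le> (\<Sum>i<n. (B * f i - C * g i)\<^sup>2)" by (simp add: sum_nonneg)
    also have "\<dots> = (\<Sum>i<n. B^2 * (f i)\<^sup>2 - 2 * B * C * (f i * g i) + C^2 * (g i)\<^sup>2)"
      by (intro sum.cong refl) (simp add: power2_eq_square algebra_simps)
    also have "\<dots> = B^2 * A - 2 * B * C * C + C^2 * B"
      unfolding A_def B_def C_def by (simp add: sum.distrib sum_subtractf sum_distrib_left)
    finally have "0 \<le> B * (B * A - C^2)" by (simp add: power2_eq_square algebra_simps)
    then have "0 \<le> B * A - C^2" using Bpos by (simp add: zero_le_mult_iff)
    then have "C^2 \<le> A * B" by (simp add: mult.commute)
    then show ?thesis unfolding A_def B_def C_def .
  qed
  then show ?thesis unfolding ip_def by (simp add: power2_eq_square)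
qed

lemma growth:
  assumes sym: "\<And>i j. i < n \<Longrightarrow> j < n \<Longrightarrow> M i j = M j i"
    and lpos: "l > 0" and x0: "ip n x x > 0"
    and R: "l * ip n x x \<le> ip n x (mv n M x)"
  shows "l^(2*k) * ip n x x \<le> ip n ((mv n M ^^ k) x) ((mv n M ^^ k) x)"
proof -
  define u where "u k = (mv n M ^^ k) x" for k
  define N where "N k = ip n (u k) (u k)" for k
  have uS: "u (Suc k) = mv n M (u k)" for k unfolding u_def by simp
  have key: "(N (Suc k))^2 \<le> N k * N (Suc (Suc k))" for k
  proof -
    have "N (Suc k) = ip n (u k) (u (Suc (Suc k)))"
      unfolding N_def uS by (rule ip_sym[OF sym])
    then show ?thesis unfolding N_def using ip_CS by metis
  qed
  have N1: "l^2 * N 0 \<le> N 1"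
  proof -
    have "(l * N 0)^2 \<le> (ip n x (mv n M x))^2"
      using R lpos x0 unfolding N_def u_def by (intro power_mono) auto
    also have "\<dots> \<le> N 0 * N 1" using ip_CS[of n x "mv n M x"] unfolding N_def u_def by simp
    finally have "N 0 * (l^2 * N 0) \<le> N 0 * N 1" by (simp add: power2_eq_square mult_ac)
    then show ?thesis using x0 unfolding N_def u_def by simp
  qed
  have step: "l^2 * N k \<le> N (Suc k) \<and> N k > 0" for k
  proof (induction k)
    case 0 then show ?case using N1 x0 unfolding N_def u_def by simp
  next
    case (Suc k)
    then have a: "l^2 * N k \<le> N (Suc k)" and b: "N k > 0" by auto
    have c: "N (Suc k) > 0" using a b lpos by (smt (verit) mult_pos_pos zero_less_power)
    have "N k * (l^2 * N (Suc k)) = l^2 * N k * N (Suc k)" by simp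
    also have "\<dots> \<le> N (Suc k) * N (Suc k)" using a c by (intro mult_right_mono) auto
    also have "\<dots> \<le> N k * N (Suc (Suc k))" using key[of k] by (simp add: power2_eq_square)
    finally have "l^2 * N (Suc k) \<le> N (Suc (Suc k))" using b by simp
    then show ?case using c by simp
  qed
  have "l^(2*k) * N 0 \<le> N k"
  proof (induction k)
    case 0 then show ?case by simp
  next
    case (Suc k)
    have "l^(2*Suc k) * N 0 = l^2 * (l^(2*k) * N 0)" by (simp add: power_add power_mult power2_eq_square)
    also have "\<dots> \<le> l^2 * N k" using Suc by (intro mult_left_mono) auto
    also have "\<dots> \<le> N (Suc k)" using step by blast
    finally show ?case .
  qed
  then show ?thesis unfolding N_def u_def by simp
qed


lemma mat_vec_real:
  fixes M :: "nat \<Rightarrow> nat \<Rightarrow> real" and n :: nat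
  defines "Ac \<equiv> map_mat complex_of_real (mat n n (\<lambda>(i,j). M i j))"
  shows "Ac ^\<^sub>m k *\<^sub>v vec n (\<lambda>i. complex_of_real (f i)) = vec n (\<lambda>i. complex_of_real ((mv n M ^^ k) f i))"
proof (induction k arbitrary: f)
  case 0
  then show ?case unfolding Ac_def by (simp del: One_nat_def)
next
  case (Suc k)
  have AcC: "Ac \<in> carrier_mat n n" unfolding Ac_def by simp
  have one: "Ac *\<^sub>v vec n (\<lambda>i. complex_of_real (f i)) = vec n (\<lambda>i. complex_of_real (mv n M f i))"
  proof (rule eq_vecI)
    fix i assume "i < dim_vec (vec n (\<lambda>i. complex_of_real (mv n M f i)))"
    then have i: "i < n" by simp
    have "(Ac *\<^sub>v vec n (\<lambda>i. complex_of_real (f i))) $ i = (\<Sum>j\<in>{0..<n}. complex_of_real (M i j) * complex_of_real (f j))"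
      using i unfolding Ac_def by (simp add: scalar_prod_def)
    also have "\<dots> = complex_of_real (mv n M f i)" unfolding mv_def by (simp add: atLeast0LessThan)
    finally show "(Ac *\<^sub>v vec n (\<lambda>i. complex_of_real (f i))) $ i = vec n (\<lambda>i. complex_of_real (mv n M f i)) $ i"
      using i by simp
  qed (simp add: Ac_def)
  have "Ac ^\<^sub>m Suc k *\<^sub>v vec n (\<lambda>i. complex_of_real (f i)) = Ac ^\<^sub>m k *\<^sub>v (Ac *\<^sub>v vec n (\<lambda>i. complex_of_real (f i)))"
    using AcC by (simp add: assoc_mult_mat_vec[of _ n n _ n])
  also have "\<dots> = vec n (\<lambda>i. complex_of_real ((mv n M ^^ k) (mv n M f) i))" unfolding one Suc ..
  also have "(mv n M ^^ k) (mv n M f) = (mv n M ^^ Suc k) f" by (simp add: funpow_Suc_right del: funpow.simps)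
  finally show ?case .
qed

lemma rayleigh:
  fixes M :: "nat \<Rightarrow> nat \<Rightarrow> real"
  assumes sym: "\<And>i j. i < n \<Longrightarrow> j < n \<Longrightarrow> M i j = M j i"
    and x0: "ip n x x > 0"
  shows "spectral_radius (map_mat complex_of_real (mat n n (\<lambda>(i,j). M i j))) \<ge> ip n x (mv n M x) / ip n x x"
proof -
  define Ac where "Ac = map_mat complex_of_real (mat n n (\<lambda>(i,j). M i j))"
  define \<rho> where "\<rho> = spectral_radius Ac"
  define l where "l = ip n x (mv n M x) / ip n x x"
  have AcC: "Ac \<in> carrier_mat n n" unfolding Ac_def by simp
  have n0: "n > 0" using x0 unfolding ip_def by (cases n) auto
  have rho0: "\<rho> \<ge> 0" using spectral_radius_mem_max(1)[OF AcC n0] unfolding \<rho>_def by auto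
  show ?thesis
  proof (rule ccontr)
    assume "\<not> ?thesis"
    then have lt: "\<rho> < l" unfolding \<rho>_def l_def Ac_def by simp
    define \<nu> where "\<nu> = (\<rho> + l) / 2"
    have nu: "\<rho> < \<nu>" "\<nu> < l" "\<nu> > 0" using lt rho0 unfolding \<nu>_def by auto
    have lpos: "l > 0" using nu by simp
    define B where "B = complex_of_real (1/\<nu>) \<cdot>\<^sub>m Ac"
    have BC: "B \<in> carrier_mat n n" unfolding B_def using AcC by simp
    have ev: "norm e < 1" if "eigenvalue B e" for e
    proof -
      from that obtain v where v: "v \<in> carrier_vec n" "v \<noteq> 0\<^sub>v n" "B *\<^sub>v v = e \<cdot>\<^sub>v v"
        unfolding eigenvalue_def eigenvector_def using BC by auto
      have "Ac *\<^sub>v v = (complex_of_real \<nu> * e) \<cdot>\<^sub>v v"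
      proof (rule eq_vecI)
        fix i assume "i < dim_vec ((complex_of_real \<nu> * e) \<cdot>\<^sub>v v)"
        then have i: "i < n" using v by simp
        have h1: "(B *\<^sub>v v) $ i = complex_of_real (1/\<nu>) * (Ac *\<^sub>v v) $ i"
          using i AcC v(1) unfolding B_def by (simp del: of_real_divide)
        have h2: "(B *\<^sub>v v) $ i = e * v $ i" using v i by simp
        from h1 h2 have "complex_of_real (1/\<nu>) * (Ac *\<^sub>v v) $ i = e * v $ i" by metis
        then have "complex_of_real \<nu> * (complex_of_real (1/\<nu>) * (Ac *\<^sub>v v) $ i) = complex_of_real \<nu> * (e * v $ i)" by simp
        moreover have "complex_of_real \<nu> * complex_of_real (1/\<nu>) = 1" using nu
          by (metis nonzero_mult_div_cancel_left less_irrefl mult.right_neutral of_real_eq_0_iff of_real_mult times_divide_eq_right)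
        ultimately have "(Ac *\<^sub>v v) $ i = complex_of_real \<nu> * (e * v $ i)" by (metis mult.assoc mult_1)
        then show "(Ac *\<^sub>v v) $ i = ((complex_of_real \<nu> * e) \<cdot>\<^sub>v v) $ i" using i v by (simp add: mult.assoc)
      qed (use AcC v in simp)
      then have "eigenvalue Ac (complex_of_real \<nu> * e)"
        unfolding eigenvalue_def eigenvector_def using v AcC by auto
      then have "norm (complex_of_real \<nu> * e) \<le> \<rho>"
        using spectral_radius_mem_max(2)[OF AcC n0] unfolding \<rho>_def spectrum_def by auto
      then have "\<nu> * norm e \<le> \<rho>" using nu by (simp add: norm_mult)
      then have "\<nu> * norm e < \<nu> * 1" using nu by linarith
      then show ?thesis using nu by (simp only: mult_less_cancel_left_pos)
    qed
    have srB: "spectral_radius B < 1"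
      using spectral_radius_mem_max(1)[OF BC n0] ev unfolding spectrum_def by auto
    obtain c where c: "\<And>k. norm_bound (B ^\<^sub>m k) c"
      using spectral_radius_jnf_norm_bound_less_1_upper_triangular[OF BC srB] by blast
    define u where "u k = (mv n M ^^ k) x" for k
    define xc where "xc = vec n (\<lambda>i. complex_of_real (x i))"
    have xcC: "xc \<in> carrier_vec n" unfolding xc_def by simp
    have P1: "B ^\<^sub>m k *\<^sub>v y = (complex_of_real (1/\<nu>))^k \<cdot>\<^sub>v (Ac ^\<^sub>m k *\<^sub>v y)" if "y \<in> carrier_vec n" for k y
      using that
    proof (induction k arbitrary: y)
      case 0 then show ?case using AcC BC by simp
    next
      case (Suc k)
      have "B ^\<^sub>m Suc k *\<^sub>v y = B ^\<^sub>m k *\<^sub>v (B *\<^sub>v y)" using BC Suc.prems by (simp add: assoc_mult_mat_vec[of _ n n _ n])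
      also have "\<dots> = (complex_of_real (1/\<nu>))^k \<cdot>\<^sub>v (Ac ^\<^sub>m k *\<^sub>v (B *\<^sub>v y))"
        using Suc.IH[of "B *\<^sub>v y"] BC Suc.prems by simp
      also have "B *\<^sub>v y = complex_of_real (1/\<nu>) \<cdot>\<^sub>v (Ac *\<^sub>v y)"
        unfolding B_def using AcC Suc.prems by (intro eq_vecI) auto
      also have "Ac ^\<^sub>m k *\<^sub>v (complex_of_real (1/\<nu>) \<cdot>\<^sub>v (Ac *\<^sub>v y)) = complex_of_real (1/\<nu>) \<cdot>\<^sub>v (Ac ^\<^sub>m k *\<^sub>v (Ac *\<^sub>v y))"
        by (rule mult_mat_vec[of _ n n]) (use AcC Suc.prems in auto)
      also have "Ac ^\<^sub>m k *\<^sub>v (Ac *\<^sub>v y) = Ac ^\<^sub>m Suc k *\<^sub>v y" using AcC Suc.prems by (simp add: assoc_mult_mat_vec[of _ n n _ n])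
      finally show ?case by (simp add: smult_smult_assoc)
    qed
    define S where "S = (\<Sum>j<n. \<bar>x j\<bar>)"
    have ubound: "\<bar>u k i\<bar> \<le> \<nu>^k * (c * S)" if i: "i < n" for k i
    proof -
      have "B ^\<^sub>m k *\<^sub>v xc = (complex_of_real (1/\<nu>))^k \<cdot>\<^sub>v vec n (\<lambda>i. complex_of_real (u k i))"
        using P1[OF xcC, of k] mat_vec_real[of n M k x] unfolding xc_def u_def Ac_def by simp
      then have "(B ^\<^sub>m k *\<^sub>v xc) $ i = complex_of_real ((1/\<nu>)^k * u k i)" using i by simp
      moreover have "(B ^\<^sub>m k *\<^sub>v xc) $ i = (\<Sum>j\<in>{0..<n}. (B ^\<^sub>m k) $$ (i,j) * complex_of_real (x j))"
        using i BC unfolding xc_def by (simp add: scalar_prod_def)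
      ultimately have "\<bar>(1/\<nu>)^k * u k i\<bar> = norm (\<Sum>j\<in>{0..<n}. (B ^\<^sub>m k) $$ (i,j) * complex_of_real (x j))"
        by (metis norm_of_real)
      also have "\<dots> \<le> (\<Sum>j\<in>{0..<n}. norm ((B ^\<^sub>m k) $$ (i,j) * complex_of_real (x j)))" by (rule norm_sum)
      also have "\<dots> \<le> (\<Sum>j\<in>{0..<n}. c * \<bar>x j\<bar>)"
      proof (rule sum_mono)
        fix j assume "j \<in> {0..<n}"
        then have "norm ((B ^\<^sub>m k) $$ (i,j)) \<le> c" using c[of k] i BC unfolding norm_bound_def by auto
        then show "norm ((B ^\<^sub>m k) $$ (i,j) * complex_of_real (x j)) \<le> c * \<bar>x j\<bar>"
          by (simp add: norm_mult mult_right_mono)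
      qed
      also have "\<dots> = c * S" unfolding S_def by (simp add: sum_distrib_left atLeast0LessThan)
      finally have "(1/\<nu>)^k * \<bar>u k i\<bar> \<le> c * S" using nu by (simp add: abs_mult)
      then have "\<nu>^k * ((1/\<nu>)^k * \<bar>u k i\<bar>) \<le> \<nu>^k * (c * S)" using nu by (intro mult_left_mono) auto
      moreover have "\<nu>^k * ((1/\<nu>)^k * \<bar>u k i\<bar>) = \<bar>u k i\<bar>" using nu
        by (simp add: power_one_over field_simps)
      ultimately show ?thesis by simp
    qed
    have R: "l * ip n x x \<le> ip n x (mv n M x)" using x0 unfolding l_def by simp
    define K where "K = real n * (c * S)^2 / ip n x x"
    have bound: "((l/\<nu>)^2)^k \<le> K" for k
    proof -
      have "l^(2*k) * ip n x x \<le> ip n (u k) (u k)"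
        using growth[OF sym lpos x0 R, of k] unfolding u_def by simp
      also have "\<dots> \<le> (\<Sum>i<n. (\<nu>^k * (c * S))^2)" unfolding ip_def
      proof (rule sum_mono)
        fix i assume "i \<in> {..<n}"
        then have "\<bar>u k i\<bar> \<le> \<nu>^k * (c * S)" using ubound by auto
        then have "\<bar>u k i\<bar>^2 \<le> (\<nu>^k * (c * S))^2" by (intro power_mono) auto
        then show "u k i * u k i \<le> (\<nu>^k * (c * S))^2" by (simp add: power2_eq_square)
      qed
      also have "\<dots> = (\<nu>^2)^k * (real n * (c * S)^2)" by (simp add: power_mult_distrib power_mult[symmetric] mult.commute mult.left_commute)
      finally have a: "(l^2)^k * ip n x x \<le> (\<nu>^2)^k * (real n * (c * S)^2)" by (simp add: power_mult)
      have "((l/\<nu>)^2)^k * ip n x x = (l^2)^k * ip n x x / (\<nu>^2)^k"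
        by (simp add: power_divide)
      also have "\<dots> \<le> real n * (c * S)^2" using a nu by (simp add: divide_le_eq mult.commute)
      finally show ?thesis unfolding K_def using x0 by (simp add: le_divide_eq)
    qed
    have q1: "(l/\<nu>)^2 > 1" using nu by (simp add: one_less_power)
    obtain k where "K < ((l/\<nu>)^2)^k" using real_arch_pow[OF q1] by blast
    then show False using bound[of k] by simp
  qed
qed




lemma sum_if_const: "(\<Sum>j<(n::nat). if P j then (r::real) else 0) = r * real (card {j. j < n \<and> P j})"
proof -
  have "(\<Sum>j<n. if P j then r else 0) = sum (\<lambda>_. r) ({..<n} \<inter> {j. P j})"
    unfolding sum.If_cases[OF finite_lessThan] by simp
  also have "{..<n} \<inter> {j. P j} = {j. j < n \<and> P j}" by auto
  finally show ?thesis by (simp add: mult.commute)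
qed

theorem theorem6p1:
  fixes n :: nat and adj :: "nat \<Rightarrow> nat \<Rightarrow> bool" and a :: "nat \<Rightarrow> bool"
  assumes "simple_graph n adj"
    and "threshold_seq n adj a"
    and "graph_connected n adj"
    and "n \<ge> 4"
    and "n - 1 < graph_size n adj" and "graph_size n adj < n choose 2"
  shows "graph_spectral_radius n adj \<ge>
    (real (num_type1 n a) - 2 + sqrt ((real (num_type1 n a))^2
        + 4 / (real (num_type1 n a) - 1) * real (F1 n a))) / 2"
proof -
  have sg: "\<And>i j. adj i j \<Longrightarrow> i < n \<and> j < n \<and> i \<noteq> j \<and> adj j i"
    using assms(1) unfolding simple_graph_def by blast
  have a0: "a 0" and th: "\<And>i j. i < j \<Longrightarrow> j < n \<Longrightarrow> adj i j \<longleftrightarrow> a j"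
    using assms(2) unfolding threshold_seq_def by auto
  have adjc: "adj i j \<longleftrightarrow> (i < j \<and> a j) \<or> (j < i \<and> a i)" if "i < n" "j < n" for i j
  proof (cases i j rule: linorder_cases)
    case less then show ?thesis using th[OF less that(2)] by auto
  next
    case equal then show ?thesis using sg by auto
  next
    case greater then show ?thesis using th[OF greater that(1)] sg by auto
  qed
  define c where "c = num_type1 n a"
  have finA: "finite {i. i < n \<and> a i}" by simp
  have "graph_size n adj > 0" using assms(5) by simp
  then obtain i j where ij: "i < j" "j < n" "adj i j"
    unfolding graph_size_def by (auto simp: card_gt_0_iff)
  have aj: "a j" using th ij by auto
  have n0: "n > 0" using ij by simp
  have "{0, j} \<subseteq> {i. i < n \<and> a i}" using aj a0 ij n0 by auto
  from card_mono[OF finA this] have c2: "c \<ge> 2" using ij unfolding c_def num_type1_def by simp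
  define T where "T i \<longleftrightarrow> a i \<and> i \<noteq> 0" for i
  define d where "d i = real (card {j. i < j \<and> j < n \<and> a j})" for i
  define L where "L = (real c - 2 + sqrt ((real c)^2 + 4 / (real c - 1) * real (F1 n a))) / 2"
  define x where "x i = (if T i then L else d i)" for i
  define Mf where "Mf i j = (if adj i j then 1 else 0 :: real)" for i j
  have cardT: "card {j. j < n \<and> T j} = c - 1"
  proof -
    have "{j. j < n \<and> T j} = {j. j < n \<and> a j} - {0}" unfolding T_def by auto
    then show ?thesis using a0 n0 unfolding c_def num_type1_def by simp
  qed
  have d0: "d 0 = real c - 1"
  proof -
    have "{j. 0 < j \<and> j < n \<and> a j} = {j. j < n \<and> T j}" unfolding T_def by auto
    then show ?thesis unfolding d_def using cardT c2 by simp
  qed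
  have mvI: "mv n Mf x i = L * d i" if i: "i < n" "\<not> T i" for i
  proof -
    have "mv n Mf x i = (\<Sum>j<n. if i < j \<and> a j then L else 0)"
      unfolding mv_def
    proof (intro sum.cong refl)
      fix j assume j: "j \<in> {..<n}"
      have "adj i j \<longleftrightarrow> i < j \<and> a j" using adjc[of i j] i j T_def by auto
      moreover have "i < j \<Longrightarrow> a j \<Longrightarrow> T j" unfolding T_def by auto
      ultimately show "Mf i j * x j = (if i < j \<and> a j then L else 0)"
        unfolding Mf_def x_def by auto
    qed
    also have "\<dots> = L * d i" unfolding sum_if_const d_def
      by (simp add: conj_commute conj_left_commute)
    finally show ?thesis .
  qed
  have mvT: "mv n Mf x i = L * (real c - 2) + (\<Sum>j<n. if j < i \<and> \<not> T j then d j else 0)"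
    if i: "i < n" "T i" for i
  proof -
    have "mv n Mf x i = (\<Sum>j<n. (if T j \<and> j \<noteq> i then L else 0) + (if j < i \<and> \<not> T j then d j else 0))"
      unfolding mv_def
    proof (intro sum.cong refl)
      fix j assume j: "j \<in> {..<n}"
      have "adj i j \<longleftrightarrow> (i < j \<and> a j) \<or> j < i" using adjc[of i j] i j T_def by auto
      moreover have "i < j \<Longrightarrow> a j \<Longrightarrow> T j" unfolding T_def by auto
      moreover have "T j \<Longrightarrow> a j" unfolding T_def by auto
      ultimately show "Mf i j * x j = (if T j \<and> j \<noteq> i then L else 0) + (if j < i \<and> \<not> T j then d j else 0)"
      proof (cases i j rule: linorder_cases)
        case less
        then show ?thesis using \<open>adj i j \<longleftrightarrow> (i < j \<and> a j) \<or> j < i\<close> \<open>i < j \<Longrightarrow> a j \<Longrightarrow> T j\<close> \<open>T j \<Longrightarrow> a j\<close>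
          by (cases "a j") (auto simp: Mf_def x_def)
      next
        case equal
        then show ?thesis using \<open>adj i j \<longleftrightarrow> (i < j \<and> a j) \<or> j < i\<close> by (simp add: Mf_def x_def)
      next
        case greater
        then show ?thesis using \<open>adj i j \<longleftrightarrow> (i < j \<and> a j) \<or> j < i\<close>
          by (cases "T j") (auto simp: Mf_def x_def)
      qed
    qed
    also have "\<dots> = L * real (card {j. j < n \<and> T j \<and> j \<noteq> i}) + (\<Sum>j<n. if j < i \<and> \<not> T j then d j else 0)"
      by (simp add: sum.distrib sum_if_const)
    also have "card {j. j < n \<and> T j \<and> j \<noteq> i} = c - 2"
    proof -
      have "{j. j < n \<and> T j \<and> j \<noteq> i} = {j. j < n \<and> T j} - {i}" by auto
      then show ?thesis using cardT i by simp
    qed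
    finally show ?thesis using c2 by (simp add: of_nat_diff)
  qed
  define G where "G = (\<Sum>i<n. if \<not> T i then d i * d i else 0)"
  define H where "H = (\<Sum>i<n. if T i then (\<Sum>j<n. if j < i \<and> \<not> T j then d j else 0) else 0)"
  have HG: "H = G"
  proof -
    have "H = (\<Sum>i<n. \<Sum>j<n. if T i \<and> j < i \<and> \<not> T j then d j else 0)"
      unfolding H_def by (intro sum.cong refl) auto
    also have "\<dots> = (\<Sum>j<n. \<Sum>i<n. if T i \<and> j < i \<and> \<not> T j then d j else 0)" by (rule sum.swap)
    also have "\<dots> = G" unfolding G_def
    proof (intro sum.cong refl)
      fix j assume j: "j \<in> {..<n}"
      have "(\<Sum>i<n. if T i \<and> j < i \<and> \<not> T j then d j else 0) = d j * real (card {i. i < n \<and> T i \<and> j < i \<and> \<not> T j})"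
        by (rule sum_if_const)
      also have "\<dots> = (if \<not> T j then d j * d j else 0)"
      proof (cases "T j")
        case True then show ?thesis by simp
      next
        case False
        have "{i. i < n \<and> T i \<and> j < i \<and> \<not> T j} = {i. j < i \<and> i < n \<and> a i}"
          using False unfolding T_def by auto
        then show ?thesis using False unfolding d_def by simp
      qed
      finally show "(\<Sum>i<n. if T i \<and> j < i \<and> \<not> T j then d j else 0) = (if \<not> T j then d j * d j else 0)" .
    qed
    finally show ?thesis .
  qed
  have ipxx: "ip n x x = L * L * (real c - 1) + G"
  proof -
    have "ip n x x = (\<Sum>i<n. (if T i then L * L else 0) + (if \<not> T i then d i * d i else 0))"
      unfolding ip_def x_def by (intro sum.cong refl) auto
    also have "\<dots> = L * L * (real c - 1) + G"
      unfolding G_def sum.distrib sum_if_const cardT using c2 by (simp add: of_nat_diff)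
    finally show ?thesis .
  qed
  have ipxM: "ip n x (mv n Mf x) = L * L * (real c - 2) * (real c - 1) + 2 * L * G"
  proof -
    have "ip n x (mv n Mf x) = (\<Sum>i<n. (if T i then L * (L * (real c - 2)) else 0)
          + L * (if T i then (\<Sum>j<n. if j < i \<and> \<not> T j then d j else 0) else 0)
          + L * (if \<not> T i then d i * d i else 0))"
      unfolding ip_def
    proof (intro sum.cong refl)
      fix i assume "i \<in> {..<n}"
      then have i: "i < n" by simp
      show "x i * mv n Mf x i = (if T i then L * (L * (real c - 2)) else 0)
          + L * (if T i then (\<Sum>j<n. if j < i \<and> \<not> T j then d j else 0) else 0)
          + L * (if \<not> T i then d i * d i else 0)"
      proof (cases "T i")
        case True
        then have "x i = L" unfolding x_def by simp
        then show ?thesis unfolding mvT[OF i True] using True by (simp add: algebra_simps)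
      next
        case False
        then have "x i = d i" unfolding x_def by simp
        then show ?thesis unfolding mvI[OF i False] using False by (simp add: algebra_simps)
      qed
    qed
    also have "\<dots> = L * (L * (real c - 2)) * (real c - 1) + L * H + L * G"
      unfolding sum.distrib sum_distrib_left[symmetric] sum_if_const cardT H_def G_def
      using c2 by (simp add: of_nat_diff)
    finally show ?thesis using HG by (simp add: algebra_simps)
  qed
  have F1eq: "real (F1 n a) = (\<Sum>k<n. if \<not> a k then d k * d k else 0)"
  proof -
    have "F1 n a = (\<Sum>k\<in>set (filter (\<lambda>k. \<not> a k) [0..<n]). (card {j. k < j \<and> j < n \<and> a j})^2)"
      unfolding F1_def bzps_def by (simp add: sum_list_distinct_conv_sum_set comp_def)
    also have "set (filter (\<lambda>k. \<not> a k) [0..<n]) = {k\<in>{..<n}. \<not> a k}" by auto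
    finally have "real (F1 n a) = (\<Sum>k\<in>{k\<in>{..<n}. \<not> a k}. d k * d k)"
      unfolding d_def by (simp add: power2_eq_square)
    also have "\<dots> = (\<Sum>k<n. if \<not> a k then d k * d k else 0)" by (rule sum.inter_filter) simp
    finally show ?thesis .
  qed
  have GF: "G = (real c - 1)^2 + real (F1 n a)"
  proof -
    have "G = (\<Sum>i<n. (if i = 0 then d 0 * d 0 else 0) + (if \<not> a i then d i * d i else 0))"
      unfolding G_def T_def by (intro sum.cong refl) (auto simp: a0)
    also have "\<dots> = d 0 * d 0 + real (F1 n a)" unfolding sum.distrib F1eq using n0 by simp
    finally show ?thesis using d0 by (simp add: power2_eq_square)
  qed
  have key: "(real c - 1) * (L * L - (real c - 2) * L) = G"
  proof -
    define D where "D = (real c)^2 + 4 / (real c - 1) * real (F1 n a)"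
    have c1: "real c - 1 > 0" using c2 by simp
    have D0: "D \<ge> 0" unfolding D_def using c1 by simp
    have s: "sqrt D * sqrt D = D" using D0 by simp
    have "L * L - (real c - 2) * L = (sqrt D * sqrt D - (real c - 2)^2) / 4"
      unfolding L_def D_def[symmetric] by (simp add: field_simps power2_eq_square)
    also have "\<dots> = (D - (real c - 2)^2) / 4" unfolding s ..
    also have "\<dots> = (real c - 1) + real (F1 n a) / (real c - 1)"
      unfolding D_def using c1 by (simp add: field_simps power2_eq_square)
    finally show ?thesis unfolding GF using c1 by (simp add: field_simps power2_eq_square)
  qed
  have x0pos: "ip n x x > 0"
  proof -
    have "0 < x 0 * x 0" unfolding x_def T_def using d0 c2 by simp
    also have "\<dots> \<le> ip n x x" unfolding ip_def
      using member_le_sum[of 0 "{..<n}" "\<lambda>i. x i * x i"] n0 by simp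
    finally show ?thesis .
  qed
  have eq: "ip n x (mv n Mf x) / ip n x x = L"
  proof -
    have "ip n x (mv n Mf x) = L * ip n x x"
      unfolding ipxM ipxx key[symmetric] by (simp add: algebra_simps) 
    then show ?thesis using x0pos by simp
  qed
  have symM: "\<And>i j. i < n \<Longrightarrow> j < n \<Longrightarrow> Mf i j = Mf j i" unfolding Mf_def using sg by metis
  have "L \<le> spectral_radius (map_mat complex_of_real (mat n n (\<lambda>(i,j). Mf i j)))"
  proof -
    have "ip n x (mv n Mf x) / ip n x x \<le> spectral_radius (map_mat complex_of_real (mat n n (\<lambda>(i,j). Mf i j)))"
      by (rule rayleigh[of n Mf x]) (use symM x0pos in auto)
    then show ?thesis unfolding eq .
  qed
  then show ?thesis
    unfolding graph_spectral_radius_def adjacency_matrix_def L_def c_def Mf_def .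
qed

end
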